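(* Let $\mathbb{G}\subseteq S_N^+$ be a quantum permutation group. The orbital relation $\sim_2$ on $\{1,\dots,N\}^2$ is transitive: if $u_{i_2j_2}u_{i_1j_1}\neq0$ and $u_{j_2k_2}u_{j_1k_1}\neq0$ in $C(\mathbb{G})$, then $u_{i_2k_2}u_{i_1k_1}\neq0$.
   Context: A quantum permutation group $\mathbb{G}\subseteq S_N^+$: a unital $\mathrm{C}^*$-algebra $C(\mathbb{G})$ generated by the entries of an $N\times N$ magic unitary $u=(u_{ij})$ (projections, rows and columns summing to $1$), with a unital $*$-homomorphism $\Delta(u_{ij})=\sum_k u_{ik}\otimes u_{kj}$. For $k\ge1$ the $k$-orbital relation $\sim_k$ on $\{1,\dots,N\}^k$ is defined by $(i_k,\dots,i_1)\sim_k(j_k,\dots,j_1)$ iff $u_{i_kj_k}\cdots u_{i_1j_1}\neq0$; $\sim_2$ is called the orbital relation. *)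

theory Defs
  imports "HOL-Analysis.Analysis"
begin

class cstar_algebra = real_normed_algebra_1 + banach +
  fixes scaleC :: "complex \<Rightarrow> 'a \<Rightarrow> 'a"
    and cstar :: "'a \<Rightarrow> 'a"
  assumes scaleC_add_right: "scaleC c (x + y) = scaleC c x + scaleC c y"
    and scaleC_add_left: "scaleC (c + d) x = scaleC c x + scaleC d x"
    and scaleC_scaleC: "scaleC c (scaleC d x) = scaleC (c * d) x"
    and scaleC_one: "scaleC 1 x = x"
    and scaleC_of_real: "scaleC (complex_of_real r) x = scaleR r x"
    and scaleC_mult_left: "scaleC c x * y = scaleC c (x * y)"
    and scaleC_mult_right: "x * scaleC c y = scaleC c (x * y)"
    and norm_scaleC: "norm (scaleC c x) = cmod c * norm x"
    and cstar_cstar: "cstar (cstar x) = x"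
    and cstar_add: "cstar (x + y) = cstar x + cstar y"
    and cstar_mult: "cstar (x * y) = cstar y * cstar x"
    and cstar_scaleC: "cstar (scaleC c x) = scaleC (cnj c) (cstar x)"
    and cstar_identity: "norm (cstar x * x) = (norm x)\<^sup>2"

inductive_set star_alg_gen :: "'a::cstar_algebra set \<Rightarrow> 'a set" for S where
  gen: "x \<in> S \<Longrightarrow> x \<in> star_alg_gen S"
| one: "1 \<in> star_alg_gen S"
| add: "x \<in> star_alg_gen S \<Longrightarrow> y \<in> star_alg_gen S \<Longrightarrow> x + y \<in> star_alg_gen S"
| mult: "x \<in> star_alg_gen S \<Longrightarrow> y \<in> star_alg_gen S \<Longrightarrow> x * y \<in> star_alg_gen S"
| scale: "x \<in> star_alg_gen S \<Longrightarrow> scaleC c x \<in> star_alg_gen S"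
| star: "x \<in> star_alg_gen S \<Longrightarrow> cstar x \<in> star_alg_gen S"

definition generates_cstar :: "'a::cstar_algebra set \<Rightarrow> bool" where
  "generates_cstar S \<longleftrightarrow> closure (star_alg_gen S) = UNIV"

definition is_projection :: "'a::cstar_algebra \<Rightarrow> bool" where
  "is_projection p \<longleftrightarrow> cstar p = p \<and> p * p = p"

definition magic_unitary :: "nat \<Rightarrow> (nat \<Rightarrow> nat \<Rightarrow> 'a::cstar_algebra) \<Rightarrow> bool" where
  "magic_unitary N u \<longleftrightarrow>
     (\<forall>i\<in>{1..N}. \<forall>j\<in>{1..N}. is_projection (u i j)) \<and>
     (\<forall>i\<in>{1..N}. (\<Sum>j\<in>{1..N}. u i j) = 1) \<and>
     (\<forall>j\<in>{1..N}. (\<Sum>i\<in>{1..N}. u i j) = 1)"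

text \<open>tp realises B as a C*-tensor product of A with itself: tp is a bilinear map
a, b |-> a \<otimes> b that is multiplicative, *-preserving, unital, a cross norm, and the
elementary tensors span a dense subspace of B. (Minimality of the norm cannot be
expressed without a spatial representation.)\<close>
definition cstar_tensor ::
  "('a::cstar_algebra \<Rightarrow> 'a \<Rightarrow> 'b::cstar_algebra) \<Rightarrow> bool" where
  "cstar_tensor tp \<longleftrightarrow>
     (\<forall>x y z. tp (x + y) z = tp x z + tp y z) \<and>
     (\<forall>x y z. tp x (y + z) = tp x y + tp x z) \<and>
     (\<forall>c x y. tp (scaleC c x) y = scaleC c (tp x y)) \<and>
     (\<forall>c x y. tp x (scaleC c y) = scaleC c (tp x y)) \<and>
     (\<forall>x y z w. tp x y * tp z w = tp (x * z) (y * w)) \<and>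
     (\<forall>x y. cstar (tp x y) = tp (cstar x) (cstar y)) \<and>
     tp 1 1 = 1 \<and>
     (\<forall>x y. norm (tp x y) = norm x * norm y) \<and>
     closure {(\<Sum>k<n. tp (f k) (g k)) | (n::nat) (f::nat \<Rightarrow> 'a) (g::nat \<Rightarrow> 'a). True} = UNIV"

definition unital_star_hom :: "('a::cstar_algebra \<Rightarrow> 'b::cstar_algebra) \<Rightarrow> bool" where
  "unital_star_hom h \<longleftrightarrow>
     (\<forall>x y. h (x + y) = h x + h y) \<and>
     (\<forall>c x. h (scaleC c x) = scaleC c (h x)) \<and>
     (\<forall>x y. h (x * y) = h x * h y) \<and>
     (\<forall>x. h (cstar x) = cstar (h x)) \<and>
     h 1 = 1"

text \<open>(A, u, tp, Delta) is a quantum permutation group G \<subseteq> S_N^+ with C(G) = A,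
fundamental magic unitary u (indexed by {1..N}), C(G) \<otimes> C(G) realised by tp, and
comultiplication Delta.\<close>
definition quantum_permutation_group ::
  "nat \<Rightarrow> (nat \<Rightarrow> nat \<Rightarrow> 'a::cstar_algebra) \<Rightarrow> ('a \<Rightarrow> 'a \<Rightarrow> 'b::cstar_algebra) \<Rightarrow> ('a \<Rightarrow> 'b) \<Rightarrow> bool"
  where
  "quantum_permutation_group N u tp \<Delta> \<longleftrightarrow>
     magic_unitary N u \<and>
     generates_cstar {u i j | i j. i \<in> {1..N} \<and> j \<in> {1..N}} \<and>
     cstar_tensor tp \<and>
     unital_star_hom \<Delta> \<and>
     (\<forall>i\<in>{1..N}. \<forall>j\<in>{1..N}. \<Delta> (u i j) = (\<Sum>k\<in>{1..N}. tp (u i k) (u k j)))"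

text \<open>A k-tuple (i_k, ..., i_1) is represented by the list [i_k, ..., i_1]; the product
u_{i_k j_k} ... u_{i_1 j_1} is taken in list order.\<close>
fun prod_entries :: "(nat \<Rightarrow> nat \<Rightarrow> 'a::cstar_algebra) \<Rightarrow> nat list \<Rightarrow> nat list \<Rightarrow> 'a" where
  "prod_entries u (i # is) (j # js) = u i j * prod_entries u is js"
| "prod_entries u _ _ = 1"

definition orbital_rel :: "nat \<Rightarrow> (nat \<Rightarrow> nat \<Rightarrow> 'a::cstar_algebra) \<Rightarrow> nat \<Rightarrow> (nat list \<times> nat list) set"
  where
  "orbital_rel N u k =
     {(is, js). length is = k \<and> length js = k \<and> set is \<subseteq> {1..N} \<and> set js \<subseteq> {1..N}
                \<and> prod_entries u is js \<noteq> 0}"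

end

theory Submission imports Defs begin

interpretation csc: module "scaleC :: complex \<Rightarrow> 'a::cstar_algebra \<Rightarrow> 'a"
  by standard (simp_all add: scaleC_add_right scaleC_add_left scaleC_scaleC scaleC_one)

lemma lin2: "scaleC a (x + y) + scaleC a' (x - y) = scaleC (a+a') x + scaleC (a-a') (y::'a::cstar_algebra)"
  unfolding csc.scale_right_distrib csc.scale_right_diff_distrib csc.scale_left_distrib csc.scale_left_diff_distrib
  by (simp add: algebra_simps)

lemma cstar_zero: "cstar (0::'a::cstar_algebra) = 0"
  by (metis add_cancel_right_right cstar_add)

lemma cstar_minus: "cstar (- x) = - cstar (x::'a::cstar_algebra)"
proof -
  have "cstar (- x) + cstar x = cstar (- x + x)" by (rule cstar_add[symmetric])
  also have "\<dots> = 0" by (simp only: add.left_inverse cstar_zero)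
  finally show ?thesis by (simp only: eq_neg_iff_add_eq_0)
qed

lemma cstar_diff: "cstar (x - y) = cstar x - cstar (y::'a::cstar_algebra)"
  by (simp only: diff_conv_add_uminus cstar_add cstar_minus)

lemma cstar_one: "cstar (1::'a::cstar_algebra) = 1"
  by (metis cstar_cstar cstar_mult mult_1_right)

lemma scaleC_real: "scaleC (complex_of_real r) x = r *\<^sub>R (x::'a::cstar_algebra)"
  by (rule scaleC_of_real)

lemma cstar_scaleR: "cstar (r *\<^sub>R x) = r *\<^sub>R cstar (x::'a::cstar_algebra)"
  by (metis cstar_scaleC scaleC_of_real complex_cnj_complex_of_real)

lemma proj_norm_le1:
  assumes "is_projection (P::'a::cstar_algebra)" shows "norm P \<le> 1"
proof -
  have "(norm P)^2 = norm P" using cstar_identity[of P] assms by (simp add: is_projection_def)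
  then have "norm P * (norm P - 1) = 0" by (simp add: power2_eq_square algebra_simps)
  then show ?thesis by auto
qed

lemma proj_compl: "is_projection (P::'a::cstar_algebra) \<Longrightarrow> is_projection (1 - P)"
  by (simp add: is_projection_def cstar_diff cstar_one algebra_simps)

lemma sq_zero: "cstar x * x = 0 \<Longrightarrow> (x::'a::cstar_algebra) = 0"
  using cstar_identity[of x] by simp

lemma roots_sum:
  assumes N: "0 < N"
  shows "(\<Sum>j<N. (cis (2*pi/N) ^ m) ^ j) = (if N dvd m then of_nat N else 0)"
proof -
  have c1: "cis (2*pi) = 1" by (simp add: complex_eq_iff field_simps)
  define w where "w = cis (2*pi/N) ^ m"
  have w: "w = cis (2*pi*m/N)" unfolding w_def by (subst Complex.DeMoivre) (simp add: field_simps)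
  have wN: "w ^ N = 1"
  proof -
    have "w ^ N = cis (2*pi*m)" unfolding w Complex.DeMoivre using N by (simp add: field_simps)
    also have "\<dots> = cis (2*pi) ^ m" unfolding Complex.DeMoivre by (simp add: mult_ac)
    finally show ?thesis by (simp add: c1)
  qed
  show ?thesis
  proof (cases "N dvd m")
    case True
    then obtain k where k: "m = N * k" by auto
    have "w = cis (2*pi) ^ k" unfolding w Complex.DeMoivre k using N by (simp add: field_simps)
    then have w1: "w = 1" by (simp add: c1)
    have "(\<Sum>j<N. w ^ j) = of_nat N" by (simp add: w1)
    then show ?thesis using True unfolding w_def by simp
  next
    case False
    have "w \<noteq> 1"
    proof
      assume "w = 1"
      then have "cos (2*pi*m/N) = 1" unfolding w by (simp add: complex_eq_iff)
      then obtain k :: int where "2*pi*m/N = k * 2 * pi" by (auto simp: cos_one_2pi_int)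
      then have "real m = real_of_int k * N" using N by (simp add: field_simps)
      then have "real_of_int (int m) = real_of_int (k * int N)" by simp
      then have "int m = k * int N" by (simp only: of_int_eq_iff)
      then have "int N dvd int m" by simp
      then show False using False by simp
    qed
    then have "(\<Sum>j<N. w ^ j) = 0" using wN by (simp add: sum_gp_strict)
    then show ?thesis using False unfolding w_def by simp
  qed
qed

context
  fixes P b :: "'a::cstar_algebra"
  assumes P: "is_projection P" and bsa: "cstar b = b" and Pb: "P * b = b" and bP: "b * P = b"
    and bp: "norm (P + b) \<le> 1" and bm: "norm (P - b) \<le> 1"
begin

definition E :: "complex \<Rightarrow> 'a" where "E z = P + scaleC z b"

lemma PP: "P * P = P" using P by (simp add: is_projection_def)

lemma E_mult: "E w * E z = P + scaleC (w + z) b + scaleC (w * z) (b * b)"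
  unfolding E_def
  by (simp add: algebra_simps scaleC_mult_left scaleC_mult_right scaleC_scaleC
      csc.scale_left_distrib PP Pb bP)

lemma E_star: "cstar (E z) = E (cnj z)"
proof -
  have cP: "cstar P = P" using P by (simp add: is_projection_def)
  show ?thesis unfolding E_def by (simp only: cstar_add cstar_scaleC bsa cP)
qed

lemma E_real: assumes "\<bar>c\<bar> \<le> 1" shows "norm (E (complex_of_real c)) \<le> 1"
proof -
  have s1: "complex_of_real ((1+c)/2) + complex_of_real ((1-c)/2) = 1" by (simp add: complex_eq_iff field_simps)
  have s2: "complex_of_real ((1+c)/2) - complex_of_real ((1-c)/2) = complex_of_real c" by (simp add: complex_eq_iff field_simps)
  have "E (complex_of_real c) = scaleC (complex_of_real ((1+c)/2)) (P + b)
           + scaleC (complex_of_real ((1-c)/2)) (P - b)"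
    unfolding E_def lin2 s1 s2 by (simp add: scaleC_one)
  also have "norm \<dots> \<le> ((1+c)/2) * norm (P+b) + ((1-c)/2) * norm (P-b)"
  proof -
    have n1: "cmod (complex_of_real ((1+c)/2)) = (1+c)/2"
      by (subst norm_of_real) (use assms in auto)
    have n2: "cmod (complex_of_real ((1-c)/2)) = (1-c)/2"
      by (subst norm_of_real) (use assms in auto)
    show ?thesis by (rule order.trans[OF norm_triangle_ineq]) (simp only: norm_scaleC n1 n2 order.refl)
  qed
  also have "\<dots> \<le> ((1+c)/2) * 1 + ((1-c)/2) * 1"
    using assms bp bm by (intro add_mono mult_left_mono) auto
  finally show ?thesis by (simp add: field_simps)
qed

lemma E_small: assumes "cmod z \<le> 1/2" shows "norm (E z) \<le> 1"
proof -
  define x1 where "x1 = Re z + Im z"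
  define x2 where "x2 = Re z - Im z"
  have cm0: "(cmod z)^2 \<le> (1/2)^2" using assms by (intro power_mono) auto
  have cm: "(Re z)^2 + (Im z)^2 \<le> 1/4" using cm0 cmod_power2[of z] by (simp add: power2_eq_square)
  have d1: "0 \<le> (Re z - Im z)^2" "0 \<le> (Re z + Im z)^2" by simp_all
  have h1: "x1^2 \<le> 1" unfolding x1_def using cm d1 unfolding power2_sum power2_diff by linarith
  have h2: "x2^2 \<le> 1" unfolding x2_def using cm d1 unfolding power2_sum power2_diff by linarith
  have a1: "\<bar>x1\<bar> \<le> 1" using h1 by (simp add: abs_square_le_1)
  have a2: "\<bar>x2\<bar> \<le> 1" using h2 by (simp add: abs_square_le_1)
  have s1: "complex_of_real x1 + complex_of_real x1 + (complex_of_real x2 + complex_of_real x2) = 2 * (cnj z + z)"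
    by (simp add: complex_eq_iff x1_def x2_def)
  have s2: "complex_of_real x1 * complex_of_real x1 + complex_of_real x2 * complex_of_real x2 = 2 * (cnj z * z)"
    by (simp add: complex_eq_iff x1_def x2_def algebra_simps power2_eq_square)
  have eq: "scaleC 2 (E (cnj z) * E z) = E x1 * E x1 + E x2 * E x2"
  proof -
    have "E x1 * E x1 + E x2 * E x2 = (P + P) + (scaleC (complex_of_real x1 + complex_of_real x1) b + scaleC (complex_of_real x2 + complex_of_real x2) b)
       + (scaleC (complex_of_real x1 * complex_of_real x1) (b*b) + scaleC (complex_of_real x2 * complex_of_real x2) (b*b))"
      unfolding E_mult by (simp only: add_ac)
    also have "\<dots> = (P + P) + scaleC (2 * (cnj z + z)) b + scaleC (2 * (cnj z * z)) (b*b)"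
      unfolding csc.scale_left_distrib[symmetric] s1 s2 by (simp only: add_ac)
    also have "\<dots> = scaleC 2 (E (cnj z) * E z)"
    proof -
      have "scaleC 2 P = P + P"
        using csc.scale_left_distrib[of 1 1 P] by (simp add: scaleC_one one_add_one)
      then show ?thesis unfolding E_mult csc.scale_right_distrib scaleC_scaleC by simp
    qed
    finally show ?thesis by simp
  qed
  have "(norm (E z))^2 = norm (E (cnj z) * E z)"
    using cstar_identity[of "E z"] E_star by simp
  also have "E (cnj z) * E z = scaleC (1/2) (E x1 * E x1 + E x2 * E x2)"
    unfolding eq[symmetric] by (simp add: scaleC_scaleC scaleC_one)
  also have "norm \<dots> = (1/2) * norm (E x1 * E x1 + E x2 * E x2)" by (simp add: norm_scaleC)
  also have "\<dots> \<le> (1/2) * (norm (E x1) * norm (E x1) + norm (E x2) * norm (E x2))"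
    by (intro mult_left_mono order.trans[OF norm_triangle_ineq] add_mono norm_mult_ineq) auto
  also have "\<dots> \<le> (1/2) * (1 * 1 + 1 * 1)"
    using E_real[OF a1] E_real[OF a2]
    by (intro mult_left_mono add_mono mult_mono) auto
  finally have "(norm (E z))^2 \<le> 1" by simp
  then show ?thesis by (simp add: abs_square_le_1)
qed

lemma PE: "P * E z = E z" unfolding E_def by (simp add: algebra_simps PP Pb scaleC_mult_right)
lemma EP: "E z * P = E z" unfolding E_def by (simp add: algebra_simps PP bP scaleC_mult_left)

lemma B_step: "E z * (P * b^k) = P * b^k + scaleC z (P * b^Suc k)"
proof -
  have 1: "P * (P * b^k) = P * b^k" by (simp add: mult.assoc[symmetric] PP)
  have 2: "b * (P * b^k) = P * b^Suc k" by (simp add: mult.assoc[symmetric] Pb bP)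
  show ?thesis unfolding E_def by (simp add: distrib_right 1 scaleC_mult_left 2)
qed

lemma E_pow: "P * E z ^ n = (\<Sum>k\<le>n. scaleC (of_nat (n choose k) * z^k) (P * b^k))"
proof (induction n)
  case 0
  then show ?case by simp
next
  case (Suc n)
  define g where "g k = scaleC (of_nat (n choose k) * z^k) (P * b^k)" for k
  define h where "h k = scaleC (of_nat (n choose k) * z^(Suc k)) (P * b^(Suc k))" for k
  have "P * E z ^ Suc n = E z * (P * E z ^ n)"
    by (simp add: mult.assoc[symmetric] PE EP)
  also have "\<dots> = (\<Sum>k\<le>n. g k) + (\<Sum>k\<le>n. h k)"
    unfolding Suc g_def h_def
    by (simp add: sum_distrib_left scaleC_mult_right B_step csc.scale_right_distrib
        sum.distrib scaleC_scaleC mult_ac)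
  also have "(\<Sum>k\<le>n. g k) = g 0 + (\<Sum>k\<le>n. g (Suc k))"
  proof -
    have "(\<Sum>k\<le>n. g k) = (\<Sum>k\<le>Suc n. g k)" by (simp add: g_def binomial_eq_0)
    also have "\<dots> = g 0 + (\<Sum>k\<le>n. g (Suc k))" by (rule sum.atMost_Suc_shift)
    finally show ?thesis .
  qed
  also have "g 0 + (\<Sum>k\<le>n. g (Suc k)) + (\<Sum>k\<le>n. h k)
      = (\<Sum>k\<le>Suc n. scaleC (of_nat (Suc n choose k) * z^k) (P * b^k))"
  proof -
    define t where "t k = scaleC (of_nat (Suc n choose k) * z^k) (P * b^k)" for k
    have t0: "t 0 = g 0" by (simp add: t_def g_def)
    have tS: "t (Suc k) = h k + g (Suc k)" for k
      unfolding t_def g_def h_def binomial_Suc_Suc of_nat_add distrib_right csc.scale_left_distrib ..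
    have "(\<Sum>k\<le>Suc n. t k) = t 0 + (\<Sum>k\<le>n. t (Suc k))" by (rule sum.atMost_Suc_shift)
    also have "\<dots> = g 0 + (\<Sum>k\<le>n. g (Suc k)) + (\<Sum>k\<le>n. h k)"
      unfolding t0 tS sum.distrib by (simp only: add_ac)
    finally show ?thesis unfolding t_def by simp
  qed
  finally show ?case .
qed

lemma normP: "norm P \<le> 1" using proj_norm_le1[OF P] .

lemma coef_sum:
  assumes n: "1 \<le> n" and k: "k \<le> n"
  shows "(\<Sum>j<Suc n. cis (2*pi/Suc n) ^ (j * n) * (of_nat (n choose k) * ((1/2) * cis (2*pi/Suc n) ^ j) ^ k))
       = (if k = 1 then of_nat (Suc n) * of_nat n / 2 else 0)"
proof -
  define \<omega> where "\<omega> = cis (2*pi/Suc n)"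
  have "(\<Sum>j<Suc n. \<omega> ^ (j * n) * (of_nat (n choose k) * ((1/2) * \<omega> ^ j) ^ k))
      = (\<Sum>j<Suc n. (of_nat (n choose k) * (1/2)^k) * (\<omega> ^ (n + k)) ^ j)"
  proof (rule sum.cong[OF refl])
    fix j
    have e1: "\<omega> ^ (j * n) * (\<omega> ^ j) ^ k = (\<omega> ^ (n + k)) ^ j"
      by (simp add: power_add[symmetric] power_mult[symmetric] algebra_simps)
    show "\<omega> ^ (j * n) * (of_nat (n choose k) * ((1/2) * \<omega> ^ j) ^ k)
        = (of_nat (n choose k) * (1/2)^k) * (\<omega> ^ (n + k)) ^ j"
    proof -
      have "\<omega> ^ (j * n) * (of_nat (n choose k) * ((1/2) * \<omega> ^ j) ^ k)
          = (of_nat (n choose k) * (1/2)^k) * (\<omega> ^ (j * n) * (\<omega> ^ j) ^ k)"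
        by (simp only: power_mult_distrib mult_ac)
      then show ?thesis using e1 by simp
    qed
  qed
  also have "\<dots> = (of_nat (n choose k) * (1/2)^k) * (\<Sum>j<Suc n. (\<omega> ^ (n + k)) ^ j)"
    by (simp only: sum_distrib_left)
  also have "(\<Sum>j<Suc n. (\<omega> ^ (n + k)) ^ j) = (if Suc n dvd (n + k) then of_nat (Suc n) else 0)"
    unfolding \<omega>_def using roots_sum[of "Suc n" "n + k"] by simp
  also have "(Suc n dvd (n + k)) = (k = 1)"
  proof
    assume d: "Suc n dvd (n + k)"
    then obtain q where q: "n + k = Suc n * q" by (auto elim: dvdE)
    have "q \<noteq> 0"
    proof
      assume "q = 0" then show False using q n by simp
    qed
    moreover have "\<not> 2 \<le> q"
    proof
      assume "2 \<le> q"
      then have "Suc n * 2 \<le> Suc n * q" by (rule mult_le_mono2)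
      then show False using q k by simp
    qed
    ultimately have "q = 1" by simp
    then show "k = 1" using q by simp
  qed simp
  finally show ?thesis unfolding \<omega>_def by simp
qed

lemma b_bound: assumes n: "1 \<le> n" shows "real n * norm b \<le> 2"
proof -
  define N where "N = Suc n"
  define \<omega> where "\<omega> = cis (2*pi/Suc n)"
  define S where "S = (\<Sum>j<N. scaleC (\<omega> ^ (j * n)) (P * E ((1/2) * \<omega> ^ j) ^ n))"
  have cw: "cmod \<omega> = 1" unfolding \<omega>_def by simp
  have "norm S \<le> (\<Sum>j<N. norm (scaleC (\<omega> ^ (j * n)) (P * E ((1/2) * \<omega> ^ j) ^ n)))"
    unfolding S_def by (rule norm_sum)
  also have "\<dots> \<le> (\<Sum>j<N. 1)"
  proof (rule sum_mono)
    fix j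
    have "cmod ((1/2) * \<omega> ^ j) \<le> 1/2" by (simp add: norm_mult norm_power cw)
    then have "norm (E ((1/2) * \<omega> ^ j)) \<le> 1" by (rule E_small)
    then have "norm (E ((1/2) * \<omega> ^ j) ^ n) \<le> 1"
      by (meson norm_power_ineq order.trans power_le_one norm_ge_zero)
    then have "norm (P * E ((1/2) * \<omega> ^ j) ^ n) \<le> 1"
      using normP by (meson norm_mult_ineq order.trans mult_le_one norm_ge_zero)
    then show "norm (scaleC (\<omega> ^ (j * n)) (P * E ((1/2) * \<omega> ^ j) ^ n)) \<le> 1"
      by (simp add: norm_scaleC norm_power cw)
  qed
  finally have nS: "norm S \<le> real N" by simp
  have "S = (\<Sum>j<N. \<Sum>k\<le>n. scaleC (\<omega> ^ (j * n) * (of_nat (n choose k) * ((1/2) * \<omega> ^ j) ^ k)) (P * b^k))"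
    unfolding S_def E_pow by (simp add: csc.scale_sum_right scaleC_scaleC)
  also have "\<dots> = (\<Sum>k\<le>n. \<Sum>j<N. scaleC (\<omega> ^ (j * n) * (of_nat (n choose k) * ((1/2) * \<omega> ^ j) ^ k)) (P * b^k))"
    by (rule sum.swap)
  also have "\<dots> = (\<Sum>k\<le>n. scaleC (\<Sum>j<N. \<omega> ^ (j * n) * (of_nat (n choose k) * ((1/2) * \<omega> ^ j) ^ k)) (P * b^k))"
    by (simp add: csc.scale_sum_left)
  also have "\<dots> = (\<Sum>k\<le>n. if k = 1 then scaleC (of_nat (Suc n) * of_nat n / 2) (P * b^k) else 0)"
  proof (rule sum.cong[OF refl])
    fix k assume "k \<in> {..n}"
    then have k: "k \<le> n" by simp
    show "scaleC (\<Sum>j<N. \<omega> ^ (j * n) * (of_nat (n choose k) * ((1/2) * \<omega> ^ j) ^ k)) (P * b^k)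
        = (if k = 1 then scaleC (of_nat (Suc n) * of_nat n / 2) (P * b^k) else 0)"
      unfolding N_def \<omega>_def coef_sum[OF n k] by simp
  qed
  also have "\<dots> = scaleC (of_nat (Suc n) * of_nat n / 2) b"
    using n by (simp add: sum.delta Pb)
  finally have Seq: "S = scaleC (of_nat (Suc n) * of_nat n / 2) b" .
  have cm: "cmod (of_nat (Suc n) * of_nat n / 2) = real (Suc n) * real n / 2"
  proof -
    have "(of_nat (Suc n) * of_nat n / 2 :: complex) = complex_of_real (real (Suc n) * real n / 2)" by simp
    then show ?thesis by (simp only: norm_of_real) simp
  qed
  have "norm S = real (Suc n) * real n / 2 * norm b"
    unfolding Seq norm_scaleC cm ..
  with nS have "real (Suc n) * (real n * norm b) \<le> real (Suc n) * 2"
    unfolding N_def by (simp add: algebra_simps)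
  then show ?thesis by (simp only: mult_le_cancel_left_pos of_nat_0_less_iff zero_less_Suc)
qed

lemma b_zero: "b = 0"
proof (rule ccontr)
  assume "b \<noteq> 0"
  then have nb: "norm b > 0" by simp
  obtain n :: nat where "2 / norm b < n" using reals_Archimedean2 by blast
  then have "2 < real n * norm b" using nb by (simp add: field_simps)
  moreover have "1 \<le> n" using \<open>2 / norm b < n\<close> nb
    by (metis divide_pos_pos less_numeral_extra(1) not_less not_less_eq_eq of_nat_0 order.strict_trans zero_less_numeral less_one le_numeral_extra(4) of_nat_le_0_iff order.trans)
  ultimately show False using b_bound by fastforce
qed

end

lemma compress_zero:
  fixes P :: "'a::cstar_algebra" and Q :: "nat \<Rightarrow> 'a"
  assumes P: "is_projection P" and Q: "\<And>l. l \<in> S \<Longrightarrow> is_projection (Q l)"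
    and fin: "finite S" and l0: "l0 \<in> S" and sum0: "(\<Sum>l\<in>S. P * Q l * P) = 0"
  shows "Q l0 * P = 0"
proof -
  define m where "m = card S"
  have m1: "1 \<le> m" unfolding m_def using fin l0 by (metis One_nat_def Suc_leI card_gt_0_iff empty_iff)
  have mpos: "(0::real) < real m" using m1 by simp
  define a where "a l = P * Q l * P" for l
  define c where "c = (1 / real m) *\<^sub>R a l0"
  have cP: "cstar P = P" and PP: "P * P = P" using P by (auto simp: is_projection_def)
  have nP: "norm P \<le> 1" by (rule proj_norm_le1[OF P])
  have na: "norm (P - a l) \<le> 1" if "l \<in> S" for l
  proof -
    have "P - a l = P * (1 - Q l) * P" unfolding a_def by (simp add: algebra_simps PP)
    also have "norm \<dots> \<le> norm P * norm (1 - Q l) * norm P"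
      by (meson norm_mult_ineq order.trans mult_right_mono norm_ge_zero)
    also have "\<dots> \<le> 1 * 1 * 1"
      using nP proj_norm_le1[OF proj_compl[OF Q[OF that]]]
      by (intro mult_mono) auto
    finally show ?thesis by simp
  qed
  have c_sa: "cstar c = c"
    unfolding c_def a_def cstar_scaleR cstar_mult cP using Q[OF l0]
    by (simp add: is_projection_def mult.assoc)
  have Pc: "P * c = c" unfolding c_def a_def by (simp add: mult.assoc[symmetric] PP)
  have cP2: "c * P = c" unfolding c_def a_def by (simp add: mult.assoc PP)
  have m_minus: "norm (P - c) \<le> 1"
  proof -
    have "P - c = (1 / real m) *\<^sub>R (P - a l0) + ((real m - 1) / real m) *\<^sub>R P"
      unfolding c_def using mpos by (simp add: algebra_simps diff_divide_distrib scaleR_diff_left)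
    also have "norm \<dots> \<le> (1 / real m) * 1 + ((real m - 1) / real m) * 1"
    proof (intro order.trans[OF norm_triangle_ineq] add_mono)
      have m0: "0 \<le> (real m - 1) / real m" using m1 mpos by simp
      show "norm ((1 / real m) *\<^sub>R (P - a l0)) \<le> 1 / real m * 1"
        using na[OF l0] mpos by (simp add: divide_right_mono)
      show "norm (((real m - 1) / real m) *\<^sub>R P) \<le> (real m - 1) / real m * 1"
      proof -
        have "norm (((real m - 1) / real m) *\<^sub>R P) = ((real m - 1) / real m) * norm P"
          using m1 by simp
        also have "\<dots> \<le> (real m - 1) / real m * 1" using nP by (rule mult_left_mono[OF _ m0])
        finally show ?thesis .
      qed
    qed
    also have "\<dots> = 1" using mpos by (simp add: field_simps)
    finally show ?thesis .
  qed
  have p_plus: "norm (P + c) \<le> 1"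
  proof -
    have srem: "a l0 + (\<Sum>l\<in>S - {l0}. a l) = 0"
      using sum0 sum.remove[OF fin l0, of a] unfolding a_def by simp
    have cardr: "card (S - {l0}) = m - 1" unfolding m_def using fin l0 by simp
    have "(\<Sum>l\<in>S - {l0}. P - a l) = of_nat (m - 1) *\<^sub>R P - (\<Sum>l\<in>S - {l0}. a l)"
      by (simp add: sum_subtractf cardr scaleR_conv_of_real)
    also have "\<dots> = of_nat (m - 1) *\<^sub>R P + a l0" using srem by (simp add: eq_neg_iff_add_eq_0[symmetric])
    finally have sr: "(\<Sum>l\<in>S - {l0}. P - a l) = of_nat (m - 1) *\<^sub>R P + a l0" .
    have "P + c = (1 / real m) *\<^sub>R (P + (\<Sum>l\<in>S - {l0}. P - a l))"
    proof -
      have "real (m - 1) = real m - 1" using m1 by simp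
      then show ?thesis unfolding sr c_def using mpos
        by (simp add: algebra_simps scaleR_diff_left[symmetric] scaleR_add_left[symmetric])
    qed
    also have "norm \<dots> \<le> (1 / real m) * (1 + (\<Sum>l\<in>S - {l0}. 1))"
    proof -
      have "norm (P + (\<Sum>l\<in>S - {l0}. P - a l)) \<le> norm P + (\<Sum>l\<in>S - {l0}. norm (P - a l))"
        by (rule order.trans[OF norm_triangle_ineq add_left_mono[OF norm_sum]])
      also have "\<dots> \<le> 1 + (\<Sum>l\<in>S - {l0}. 1)"
        using nP na by (intro add_mono sum_mono) auto
      finally show ?thesis using mpos by (simp add: divide_right_mono)
    qed
    also have "\<dots> = 1" using cardr m1 mpos by (simp add: field_simps of_nat_diff)
    finally show ?thesis .
  qed
  have "c = 0" by (rule b_zero[OF P c_sa Pc cP2 p_plus m_minus])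
  then have "a l0 = 0" unfolding c_def using mpos by simp
  then have "cstar (Q l0 * P) * (Q l0 * P) = 0"
    using Q[OF l0] unfolding a_def cstar_mult cP is_projection_def
    by (simp add: mult.assoc) (metis mult.assoc)
  then show ?thesis by (rule sq_zero)
qed

lemma row_orth:
  assumes mu: "magic_unitary N u" and i: "i \<in> {1..N}" and j: "j \<in> {1..N}" and j': "j' \<in> {1..N}"
    and ne: "j' \<noteq> j"
  shows "u i j' * u i j = 0"
proof -
  have proj: "is_projection (u i l)" if "l \<in> {1..N}" for l
    using mu i that by (simp add: magic_unitary_def)
  have rs: "(\<Sum>l\<in>{1..N}. u i l) = 1" using mu i by (simp add: magic_unitary_def)
  have PP: "u i j * u i j = u i j" using proj[OF j] by (simp add: is_projection_def)
  have s: "(\<Sum>l\<in>{1..N} - {j}. u i l) = 1 - u i j"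
    using sum.remove[of "{1..N}" j "u i", OF _ j] rs by (simp add: algebra_simps)
  have "(\<Sum>l\<in>{1..N} - {j}. u i j * u i l * u i j) = u i j * (\<Sum>l\<in>{1..N} - {j}. u i l) * u i j"
    by (simp add: sum_distrib_left sum_distrib_right)
  also have "\<dots> = 0" unfolding s by (simp add: algebra_simps PP)
  finally have "(\<Sum>l\<in>{1..N} - {j}. u i j * u i l * u i j) = 0" .
  then show ?thesis
    by (intro compress_zero[where S="{1..N} - {j}" and Q="u i"]) (use proj j j' ne in auto)
qed

lemma key:
  fixes u :: "nat \<Rightarrow> nat \<Rightarrow> 'a::cstar_algebra" and tp :: "'a \<Rightarrow> 'a \<Rightarrow> 'b::cstar_algebra"
  assumes qpg: "quantum_permutation_group N u tp \<Delta>"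
    and r: "i2 \<in> {1..N}" "i1 \<in> {1..N}" "j2 \<in> {1..N}" "j1 \<in> {1..N}" "k2 \<in> {1..N}" "k1 \<in> {1..N}"
    and c: "u i2 j2 * u i1 j1 \<noteq> 0" and d: "u j2 k2 * u j1 k1 \<noteq> 0"
  shows "u i2 k2 * u i1 k1 \<noteq> 0"
proof
  assume x0: "u i2 k2 * u i1 k1 = 0"
  have mu: "magic_unitary N u" and ct: "cstar_tensor tp" and h: "unital_star_hom \<Delta>"
    and com: "\<And>i j. i \<in> {1..N} \<Longrightarrow> j \<in> {1..N} \<Longrightarrow> \<Delta> (u i j) = (\<Sum>k\<in>{1..N}. tp (u i k) (u k j))"
    using qpg by (auto simp: quantum_permutation_group_def)
  have tpm: "tp x y * tp z w = tp (x * z) (y * w)" for x y z w using ct by (simp add: cstar_tensor_def)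
  have tpn: "norm (tp x y) = norm x * norm y" for x y using ct by (simp add: cstar_tensor_def)
  have tp0: "tp 0 y = 0" for y
  proof -
    have "\<forall>x y z. tp (x + y) z = tp x z + tp y z" using ct by (simp add: cstar_tensor_def)
    then have "tp (0 + 0) y = tp 0 y + tp 0 y" by blast
    then show ?thesis by simp
  qed
  have hadd: "\<Delta> (x + y) = \<Delta> x + \<Delta> y" and hmul: "\<Delta> (x * y) = \<Delta> x * \<Delta> y" for x y
    using h by (auto simp: unital_star_hom_def)
  have D0: "\<Delta> 0 = 0"
  proof -
    have "\<Delta> (0 + 0) = \<Delta> 0 + \<Delta> 0" by (rule hadd)
    then show ?thesis by simp
  qed
  have proj: "u i j * u i j = u i j" if "i \<in> {1..N}" "j \<in> {1..N}" for i j
    using mu that by (simp add: magic_unitary_def is_projection_def)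
  have L1: "tp (u i2 j2) 1 * \<Delta> (u i2 k2) = tp (u i2 j2) (u j2 k2)"
  proof -
    have "tp (u i2 j2) 1 * \<Delta> (u i2 k2) = (\<Sum>l\<in>{1..N}. tp (u i2 j2 * u i2 l) (u l k2))"
      unfolding com[OF r(1) r(5)] sum_distrib_left tpm by simp
    also have "\<dots> = (\<Sum>l\<in>{1..N}. if l = j2 then tp (u i2 j2) (u j2 k2) else 0)"
    proof (rule sum.cong[OF refl])
      fix l assume l: "l \<in> {1..N}"
      show "tp (u i2 j2 * u i2 l) (u l k2) = (if l = j2 then tp (u i2 j2) (u j2 k2) else 0)"
      proof (cases "l = j2")
        case True then show ?thesis using proj[OF r(1) r(3)] by simp
      next
        case False
        then have "u i2 j2 * u i2 l = 0" using row_orth[OF mu r(1) l r(3)] by simp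
        then show ?thesis using False tp0 by simp
      qed
    qed
    also have "\<dots> = tp (u i2 j2) (u j2 k2)" using r(3) by (simp add: sum.delta)
    finally show ?thesis .
  qed
  have L2: "\<Delta> (u i1 k1) * tp (u i1 j1) 1 = tp (u i1 j1) (u j1 k1)"
  proof -
    have "\<Delta> (u i1 k1) * tp (u i1 j1) 1 = (\<Sum>l\<in>{1..N}. tp (u i1 l * u i1 j1) (u l k1))"
      unfolding com[OF r(2) r(6)] sum_distrib_right tpm by simp
    also have "\<dots> = (\<Sum>l\<in>{1..N}. if l = j1 then tp (u i1 j1) (u j1 k1) else 0)"
    proof (rule sum.cong[OF refl])
      fix l assume l: "l \<in> {1..N}"
      show "tp (u i1 l * u i1 j1) (u l k1) = (if l = j1 then tp (u i1 j1) (u j1 k1) else 0)"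
      proof (cases "l = j1")
        case True then show ?thesis using proj[OF r(2) r(4)] by simp
      next
        case False
        then have "u i1 l * u i1 j1 = 0" using row_orth[OF mu r(2) r(4) l] by simp
        then show ?thesis using False tp0 by simp
      qed
    qed
    also have "\<dots> = tp (u i1 j1) (u j1 k1)" using r(4) by (simp add: sum.delta)
    finally show ?thesis .
  qed
  have "0 = tp (u i2 j2) 1 * \<Delta> (u i2 k2 * u i1 k1) * tp (u i1 j1) 1"
    using x0 D0 by simp
  also have "\<dots> = (tp (u i2 j2) 1 * \<Delta> (u i2 k2)) * (\<Delta> (u i1 k1) * tp (u i1 j1) 1)"
    unfolding hmul by (simp add: mult.assoc)
  also have "\<dots> = tp (u i2 j2 * u i1 j1) (u j2 k2 * u j1 k1)" unfolding L1 L2 tpm ..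
  finally have "norm (u i2 j2 * u i1 j1) * norm (u j2 k2 * u j1 k1) = 0"
    using tpn by (metis norm_zero)
  then show False using c d by simp
qed

lemma len2: "length xs = 2 \<Longrightarrow> \<exists>a b. xs = [a, b]"
  by (auto simp: numeral_2_eq_2 length_Suc_conv)

theorem mainTheorem12:
  fixes N :: nat
    and u :: "nat \<Rightarrow> nat \<Rightarrow> 'a::cstar_algebra"
    and tp :: "'a \<Rightarrow> 'a \<Rightarrow> 'b::cstar_algebra"
    and \<Delta> :: "'a \<Rightarrow> 'b"
  assumes "quantum_permutation_group N u tp \<Delta>"
  shows "trans (orbital_rel N u 2)"
proof (rule transI)
  fix xs ys zs
  assume xy: "(xs, ys) \<in> orbital_rel N u 2" and yz: "(ys, zs) \<in> orbital_rel N u 2"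
  obtain i2 i1 where xs: "xs = [i2, i1]" using xy len2 unfolding orbital_rel_def by blast
  obtain j2 j1 where ys: "ys = [j2, j1]" using xy len2 unfolding orbital_rel_def by blast
  obtain k2 k1 where zs: "zs = [k2, k1]" using yz len2 unfolding orbital_rel_def by blast
  have r: "i2 \<in> {1..N}" "i1 \<in> {1..N}" "j2 \<in> {1..N}" "j1 \<in> {1..N}" "k2 \<in> {1..N}" "k1 \<in> {1..N}"
    using xy yz unfolding orbital_rel_def xs ys zs by auto
  have c: "u i2 j2 * u i1 j1 \<noteq> 0" using xy unfolding orbital_rel_def xs ys by simp
  have d: "u j2 k2 * u j1 k1 \<noteq> 0" using yz unfolding orbital_rel_def ys zs by simp
  have "u i2 k2 * u i1 k1 \<noteq> 0" by (rule key[OF assms r c d])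
  then show "(xs, zs) \<in> orbital_rel N u 2" using r unfolding orbital_rel_def xs zs by simp
qed

end
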